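(* Let $F$ be a connected graph and $Q$ a connected chordal graph. Let $\mu:V(F)\to V(Q)$ be a function such that for every induced path $p_1\cdots p_m$ in $F$ of length at most two, the vertices $\mu(p_1),\ldots,\mu(p_m)$ are pairwise distinct and $\mu(p_1)\cdots\mu(p_m)$ is an induced path of $Q$. Then $\mu$ is injective and preserves the adjacency relation, i.e. for all $v,w\in V(F)$, $vw\in E(F)$ if and only if $\mu(v)\mu(w)\in E(Q)$.
   Context: A graph is chordal if it has no induced cycle of length at least $4$. The length of a path is its number of edges. *)

theory Defs
  imports Main
begin

definition graph :: "'a set \<Rightarrow> ('a \<Rightarrow> 'a \<Rightarrow> bool) \<Rightarrow> bool" where
  "graph V E \<longleftrightarrow> finite V \<and> (\<forall>x y. E x y \<longrightarrow> x \<in> V \<and> y \<in> V)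
     \<and> (\<forall>x y. E x y \<longrightarrow> E y x) \<and> (\<forall>x. \<not> E x x)"

definition connected_graph :: "'a set \<Rightarrow> ('a \<Rightarrow> 'a \<Rightarrow> bool) \<Rightarrow> bool" where
  "connected_graph V E \<longleftrightarrow> graph V E \<and> V \<noteq> {} \<and> (\<forall>u\<in>V. \<forall>v\<in>V. E\<^sup>*\<^sup>* u v)"

text \<open>Induced path p_1 ... p_m (a list of m \<ge> 1 distinct vertices; its length is m - 1):
  two vertices are adjacent iff they are consecutive.\<close>
definition induced_path :: "'a set \<Rightarrow> ('a \<Rightarrow> 'a \<Rightarrow> bool) \<Rightarrow> 'a list \<Rightarrow> bool" where
  "induced_path V E ps \<longleftrightarrow> ps \<noteq> [] \<and> distinct ps \<and> set ps \<subseteq> V \<and>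
     (\<forall>i j. i < j \<and> j < length ps \<longrightarrow> (E (ps ! i) (ps ! j) \<longleftrightarrow> j = i + 1))"

definition induced_cycle :: "'a set \<Rightarrow> ('a \<Rightarrow> 'a \<Rightarrow> bool) \<Rightarrow> 'a list \<Rightarrow> bool" where
  "induced_cycle V E cs \<longleftrightarrow> length cs \<ge> 3 \<and> distinct cs \<and> set cs \<subseteq> V \<and>
     (\<forall>i j. i < j \<and> j < length cs \<longrightarrow>
        (E (cs ! i) (cs ! j) \<longleftrightarrow> j = i + 1 \<or> (i = 0 \<and> j = length cs - 1)))"

definition chordal :: "'a set \<Rightarrow> ('a \<Rightarrow> 'a \<Rightarrow> bool) \<Rightarrow> bool" where
  "chordal V E \<longleftrightarrow> graph V E \<and> (\<nexists>cs. induced_cycle V E cs \<and> length cs \<ge> 4)"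

end

theory Submission
  imports Defs
begin

lemma succ_nth: "successively P xs \<Longrightarrow> Suc i < length xs \<Longrightarrow> P (xs!i) (xs!Suc i)"
proof (induction xs arbitrary: i)
  case (Cons x xs)
  then show ?case by (cases i) (auto simp: successively_Cons hd_conv_nth)
qed auto

lemma ip_tl: assumes "induced_path V E ps" "length ps \<ge> 2" shows "induced_path V E (tl ps)"
proof -
  have "\<forall>i j. i < j \<and> j < length (tl ps) \<longrightarrow> (E (tl ps ! i) (tl ps ! j) \<longleftrightarrow> j = i + 1)"
  proof (intro allI impI)
    fix i j assume "i < j \<and> j < length (tl ps)"
    then show "E (tl ps ! i) (tl ps ! j) \<longleftrightarrow> j = i + 1"
      using assms(1) unfolding induced_path_def
      by (auto simp: nth_tl) 
  qed
  then show ?thesis using assms unfolding induced_path_def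
    by (cases ps) auto
qed

lemma ip_butlast: assumes "induced_path V E ps" "length ps \<ge> 2" shows "induced_path V E (butlast ps)"
proof -
  have "\<forall>i j. i < j \<and> j < length (butlast ps) \<longrightarrow> (E (butlast ps ! i) (butlast ps ! j) \<longleftrightarrow> j = i + 1)"
  proof (intro allI impI)
    fix i j assume "i < j \<and> j < length (butlast ps)"
    then show "E (butlast ps ! i) (butlast ps ! j) \<longleftrightarrow> j = i + 1"
      using assms(1) unfolding induced_path_def
      by (auto simp: nth_butlast) 
  qed
  moreover have "butlast ps \<noteq> []" using assms(2) by (cases ps) auto
  ultimately show ?thesis using assms unfolding induced_path_def
    by (auto simp: distinct_butlast dest: in_set_butlastD)
qed

lemma ip_ne: "induced_path V E ps \<Longrightarrow> i < j \<Longrightarrow> j < length ps \<Longrightarrow> ps!i \<noteq> ps!j"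
  unfolding induced_path_def by (simp add: nth_eq_iff_index_eq)

lemma ip_adj: "induced_path V E ps \<Longrightarrow> i < j \<Longrightarrow> j < length ps \<Longrightarrow> E (ps!i) (ps!j) \<longleftrightarrow> j = i+1"
  unfolding induced_path_def by blast

lemma main_path:
  assumes gF: "graph VF EF" and ch: "chordal VQ EQ"
    and H: "\<And>ps. induced_path VF EF ps \<Longrightarrow> length ps \<le> 3 \<Longrightarrow>
           distinct (map \<mu> ps) \<and> induced_path VQ EQ (map \<mu> ps)"
  shows "induced_path VF EF ps \<Longrightarrow> induced_path VQ EQ (map \<mu> ps)"
proof (induction "length ps" arbitrary: ps rule: less_induct)
  case less
  show ?case
  proof (cases "length ps \<le> 3")
    case True then show ?thesis using H less.prems by blast
  next
    case False
    define n where "n = length ps"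
    define qs where "qs = map \<mu> ps"
    have n4: "n \<ge> 4" using False n_def by simp
    have lq: "length qs = n" using qs_def n_def by simp
    have gQ: "graph VQ EQ" using ch unfolding chordal_def by blast
    have A: "induced_path VQ EQ (butlast qs)"
      using less.hyps[of "butlast ps"] ip_butlast[OF less.prems] n4 n_def qs_def
      by (simp add: map_butlast)
    have B: "induced_path VQ EQ (tl qs)"
      using less.hyps[of "tl ps"] ip_tl[OF less.prems] n4 n_def qs_def
      by (simp add: map_tl)
    have A': "qs!i \<noteq> qs!j \<and> (EQ (qs!i) (qs!j) \<longleftrightarrow> j = i+1)" if "i < j" "j < n - 1" for i j
      using ip_ne[OF A, of i j] ip_adj[OF A, of i j] that lq by (simp add: nth_butlast)
    have B': "qs!i \<noteq> qs!j \<and> (EQ (qs!i) (qs!j) \<longleftrightarrow> j = i+1)" if "1 \<le> i" "i < j" "j < n" for i j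
      using ip_ne[OF B, of "i-1" "j-1"] ip_adj[OF B, of "i-1" "j-1"] that lq by (auto simp: nth_tl)
    have sQ: "set qs \<subseteq> VQ"
    proof -
      obtain x y r where qxy: "qs = x # y # r" using lq n4
        by (cases qs; cases "tl qs") auto
      have "set (butlast qs) \<subseteq> VQ" "set (tl qs) \<subseteq> VQ" using A B unfolding induced_path_def by auto
      then show ?thesis using qxy by auto
    qed
    have ne: "qs!0 \<noteq> qs!(n-1)"
    proof
      assume eq: "qs!0 = qs!(n-1)"
      have "EQ (qs!0) (qs!1)" using A'[of 0 1] n4 by simp
      then have "EQ (qs!1) (qs!(n-1))" using gQ eq unfolding graph_def by metis
      then have "n - 1 = 1 + 1" using B'[of 1 "n-1"] n4 by simp
      with n4 show False by simp
    qed
    have nadj: "\<not> EQ (qs!0) (qs!(n-1))"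
    proof
      assume e: "EQ (qs!0) (qs!(n-1))"
      have P: "qs!i \<noteq> qs!j \<and> (EQ (qs!i) (qs!j) \<longleftrightarrow> j = i+1 \<or> (i = 0 \<and> j = n - 1))"
        if "i < j" "j < n" for i j
      proof (cases "j < n - 1")
        case True then show ?thesis using A'[OF that(1) True] by auto
      next
        case False
        then have j: "j = n - 1" using that by simp
        show ?thesis
        proof (cases "i = 0")
          case True then show ?thesis using j ne e by simp
        next
          case False then show ?thesis using B'[of i j] that j by simp
        qed
      qed
      have "distinct qs" unfolding distinct_conv_nth
      proof (intro allI impI)
        fix i j assume "i < length qs" "j < length qs" "i \<noteq> j"
        then show "qs!i \<noteq> qs!j" using P[of i j] P[of j i] lq by (cases "i < j") auto
      qed
      moreover note sQ
      ultimately have "induced_cycle VQ EQ qs" using P lq n4 unfolding induced_cycle_def by auto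
      then show False using ch lq n4 unfolding chordal_def by auto
    qed
    have P: "qs!i \<noteq> qs!j \<and> (EQ (qs!i) (qs!j) \<longleftrightarrow> j = i+1)"
      if "i < j" "j < n" for i j
    proof (cases "j < n - 1")
      case True then show ?thesis using A'[OF that(1) True] by auto
    next
      case False
      then have j: "j = n - 1" using that by simp
      show ?thesis
      proof (cases "i = 0")
        case True then show ?thesis using j ne nadj n4 by simp
      next
        case False then show ?thesis using B'[of i j] that j by simp
      qed
    qed
    have "distinct qs" unfolding distinct_conv_nth
    proof (intro allI impI)
      fix i j assume "i < length qs" "j < length qs" "i \<noteq> j"
      then show "qs!i \<noteq> qs!j" using P[of i j] P[of j i] lq by (cases "i < j") auto
    qed
    moreover note sQ
    moreover have "qs \<noteq> []" using lq n4 by auto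
    ultimately show ?thesis using P lq unfolding induced_path_def qs_def[symmetric] by auto
  qed
qed


lemma walk_exists:
  assumes g: "graph V E" shows "E\<^sup>*\<^sup>* v w \<Longrightarrow> v \<in> V \<Longrightarrow>
    \<exists>ps. ps \<noteq> [] \<and> hd ps = v \<and> last ps = w \<and> successively E ps \<and> set ps \<subseteq> V"
proof (induction rule: converse_rtranclp_induct)
  case base
  then show ?case by (intro exI[of _ "[w]"]) auto
next
  case (step x y)
  then have "y \<in> V" using g unfolding graph_def by blast
  then obtain ps where ps: "ps \<noteq> [] \<and> hd ps = y \<and> last ps = w \<and> successively E ps \<and> set ps \<subseteq> V"
    using step by blast
  then show ?case using step by (intro exI[of _ "x # ps"]) (auto simp: successively_Cons)
qed

lemma shortcut:
  "successively E ps \<Longrightarrow> ps \<noteq> [] \<Longrightarrow> set ps \<subseteq> V \<Longrightarrow>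
    \<exists>qs. induced_path V E qs \<and> hd qs = hd ps \<and> last qs = last ps"
proof (induction "length ps" arbitrary: ps rule: less_induct)
  case less
  show ?case
  proof (cases "induced_path V E ps")
    case True then show ?thesis by blast
  next
    case notip: False
    show ?thesis
    proof (cases "distinct ps")
      case False
      then obtain xs ys zs y where d: "ps = xs @ [y] @ ys @ [y] @ zs"
        using not_distinct_decomp by blast
      define ps' where "ps' = xs @ [y] @ zs"
      have "length ps' < length ps" using d ps'_def by simp
      moreover have "successively E ps'"
      proof -
        have e: "ps = (xs @ [y]) @ (ys @ [y] @ zs)" "ps = (xs @ [y] @ ys) @ (y # zs)" using d by simp_all
        have "successively E (xs @ [y])" using less.prems(1) e(1) successively_append_iff by metis
        moreover have "successively E (y # zs)" using less.prems(1) e(2) successively_append_iff by metis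
        ultimately show ?thesis unfolding ps'_def
          by (auto simp: successively_append_iff successively_Cons)
      qed
      moreover have "ps' \<noteq> []" "set ps' \<subseteq> V" using less.prems unfolding d ps'_def by auto
      moreover have "hd ps' = hd ps" "last ps' = last ps" unfolding d ps'_def
        by (cases xs; simp) (cases zs; simp)
      ultimately show ?thesis using less.hyps by metis
    next
      case dist: True
      then obtain i j where ij: "i < j" "j < length ps" "\<not> (E (ps!i) (ps!j) \<longleftrightarrow> j = i + 1)"
        using notip less.prems unfolding induced_path_def by blast
      have "E (ps!i) (ps!Suc i)" if "j = i + 1" using succ_nth[OF less.prems(1), of i] ij that by simp
      then have ch: "E (ps!i) (ps!j)" "j > i + 1" using ij by auto
      define ps' where "ps' = take (Suc i) ps @ drop j ps"
      have len: "length ps' < length ps" using ch ij unfolding ps'_def by simp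
      have split1: "ps = take (Suc i) ps @ drop (Suc i) ps" "ps = take j ps @ drop j ps" by simp_all
      have s1: "successively E (take (Suc i) ps)"
        using less.prems(1) split1(1) successively_append_iff by metis
      have s2: "successively E (drop j ps)"
        using less.prems(1) split1(2) successively_append_iff by metis
      have lt: "last (take (Suc i) ps) = ps!i" using ij by (subst last_conv_nth) (auto simp: min_def)
      have hd2: "hd (drop j ps) = ps!j" using ij by (simp add: hd_drop_conv_nth)
      have "successively E ps'" unfolding ps'_def using s1 s2 lt hd2 ch
        by (auto simp: successively_append_iff)
      moreover have "ps' \<noteq> []" unfolding ps'_def using ij by simp
      moreover have "set ps' \<subseteq> V" unfolding ps'_def using less.prems(3)
        using set_take_subset[of "Suc i" ps] set_drop_subset[of j ps] by auto
      moreover have "hd ps' = hd ps" unfolding ps'_def using ij less.prems(2) by simp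
      moreover have "last ps' = last ps" unfolding ps'_def using ij by simp
      ultimately show ?thesis using less.hyps len by metis
    qed
  qed
qed


lemma ip_between:
  assumes c: "connected_graph V E" and v: "v \<in> V" and w: "w \<in> V" and vw: "v \<noteq> w"
  shows "\<exists>qs. induced_path V E qs \<and> qs!0 = v \<and> qs!(length qs - 1) = w \<and> length qs \<ge> 2"
proof -
  have g: "graph V E" and r: "E\<^sup>*\<^sup>* v w" using c v w unfolding connected_graph_def by auto
  obtain ps where ps: "ps \<noteq> [] \<and> hd ps = v \<and> last ps = w \<and> successively E ps \<and> set ps \<subseteq> V"
    using walk_exists[OF g r v] by blast
  then obtain qs where qs: "induced_path V E qs" "hd qs = v" "last qs = w"
    using shortcut by metis
  have ne: "qs \<noteq> []" using qs(1) unfolding induced_path_def by simp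
  have "length qs \<noteq> 1" using qs vw by (cases qs) auto
  then have "length qs \<ge> 2" using ne by (cases qs) (auto simp: Suc_le_eq)
  then show ?thesis using qs ne by (intro exI[of _ qs]) (auto simp: hd_conv_nth last_conv_nth)
qed

theorem lemma3p2:
  fixes VF :: "'a set" and EF :: "'a \<Rightarrow> 'a \<Rightarrow> bool"
    and VQ :: "'b set" and EQ :: "'b \<Rightarrow> 'b \<Rightarrow> bool"
    and \<mu> :: "'a \<Rightarrow> 'b"
  assumes "connected_graph VF EF"
    and "connected_graph VQ EQ" and "chordal VQ EQ"
    and "\<mu> ` VF \<subseteq> VQ"
    and "\<And>ps. induced_path VF EF ps \<Longrightarrow> length ps \<le> 3 \<Longrightarrow>
           distinct (map \<mu> ps) \<and> induced_path VQ EQ (map \<mu> ps)"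
  shows "inj_on \<mu> VF \<and> (\<forall>v\<in>VF. \<forall>w\<in>VF. EF v w \<longleftrightarrow> EQ (\<mu> v) (\<mu> w))"
proof -
  have gF: "graph VF EF" using assms(1) unfolding connected_graph_def by blast
  have gQ: "graph VQ EQ" using assms(3) unfolding chordal_def by blast
  have MP: "induced_path VQ EQ (map \<mu> qs)" if "induced_path VF EF qs" for qs
    using main_path[OF gF assms(3) assms(5) that] .
  have key: "\<mu> v \<noteq> \<mu> w \<and> (EQ (\<mu> v) (\<mu> w) \<longrightarrow> EF v w)"
    if vw: "v \<in> VF" "w \<in> VF" "v \<noteq> w" for v w
  proof -
    obtain qs where qs: "induced_path VF EF qs" "qs!0 = v" "qs!(length qs - 1) = w" "length qs \<ge> 2"
      using ip_between[OF assms(1) vw] by blast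
    have m: "induced_path VQ EQ (map \<mu> qs)" using MP qs(1) .
    have l0: "0 < length qs" using qs(4) by linarith
    have "\<mu> v \<noteq> \<mu> w" using ip_ne[OF m, of 0 "length qs - 1"] qs l0 by (auto simp: nth_map)
    moreover have "EF v w" if "EQ (\<mu> v) (\<mu> w)"
    proof -
      have "length qs - 1 = 1" using ip_adj[OF m, of 0 "length qs - 1"] qs l0 that by (auto simp: nth_map)
      then show ?thesis using ip_adj[OF qs(1), of 0 1] qs by auto
    qed
    ultimately show ?thesis by blast
  qed
  have "inj_on \<mu> VF" unfolding inj_on_def using key by blast
  moreover have "EF v w \<longleftrightarrow> EQ (\<mu> v) (\<mu> w)" if "v \<in> VF" "w \<in> VF" for v w
  proof
    assume e: "EF v w"
    have "induced_path VF EF [v, w]" using e gF unfolding graph_def induced_path_def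
      by (auto simp: less_Suc_eq)
    then have "induced_path VQ EQ [\<mu> v, \<mu> w]" using MP by fastforce
    then show "EQ (\<mu> v) (\<mu> w)" using ip_adj[of VQ EQ "[\<mu> v, \<mu> w]" 0 1] by simp
  next
    assume e: "EQ (\<mu> v) (\<mu> w)"
    then have "v \<noteq> w" using gQ unfolding graph_def by auto
    then show "EF v w" using key that e by blast
  qed
  ultimately show ?thesis by blast
qed

end
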